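(* Let $E$ be a complex vector space of dimension $n$ with coordinates $(z_1,\dots,z_n)$ and $\omega=\sum_{j=1}^n i\,dz_j\wedge d\bar z_j$. Let $p,q$ be integers with $q\ge2$ and $p+q\le n$, and let $\alpha\in V^{p,q-1}$. Assume that for every $\varphi\in V^{0,1}$ there exists $\beta\in V^{p-1,q-1}$ with $\alpha\wedge\varphi=\omega\wedge\beta$. Then there exists $\gamma\in V^{p-1,q-2}$ with $\alpha=\omega\wedge\gamma$.
   Context: $V^{p,q}:=\bigwedge^pE\otimes\bigwedge^q\overline E$ is the space of $(p,q)$-forms on $E$, with $V^{p,q}:=0$ unless $0\le p,q\le n$. *)

theory Defs
  imports Complex_Main
begin

text \<open>Exterior algebra of E = C^n (real dimension 2n) over C, with the ordered basis
 dz_1,...,dz_n, dzbar_1,...,dzbar_n indexed by 0..n-1 and n..2n-1.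
 A form is represented by its coefficients on the basis monomials e_S (S a finite
 set of generator indices, listed in increasing order).\<close>

type_synonym form = "nat set \<Rightarrow> complex"

definition wsign :: "nat set \<Rightarrow> nat set \<Rightarrow> complex" where
  "wsign S T = (-1) ^ card {(s, t). s \<in> S \<and> t \<in> T \<and> t < s}"

text \<open>e_S \<and> e_T = wsign S T e_(S \<union> T) for disjoint S, T, and 0 otherwise.\<close>
definition wedge :: "form \<Rightarrow> form \<Rightarrow> form" (infixl "\<and>\<^sub>w" 70) where
  "wedge \<alpha> \<beta> U = (\<Sum>S\<in>Pow U. wsign S (U - S) * \<alpha> S * \<beta> (U - S))"

text \<open>V^{p,q}: (p,q)-forms; equal to {0} unless 0 \<le> p, q \<le> n.\<close>
definition V :: "nat \<Rightarrow> int \<Rightarrow> int \<Rightarrow> form set" where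
  "V n p q = {f. \<forall>S. f S \<noteq> 0 \<longrightarrow>
      S \<subseteq> {..<2*n} \<and> int (card (S \<inter> {..<n})) = p \<and> int (card (S \<inter> {n..<2*n})) = q}"

definition omega :: "nat \<Rightarrow> form" where
  "omega n U = (if \<exists>j<n. U = {j, n + j} then \<i> else 0)"

end

theory Submission
  imports Defs
begin


definition Pr :: "nat \<Rightarrow> nat \<Rightarrow> nat set" where "Pr n k = {k, n+k}"

lemma pairs_finite: "finite A \<Longrightarrow> finite {(s, t). s \<in> A \<and> t \<in> C \<and> t < (s::nat)}"
  by (rule finite_subset[of _ "SIGMA s:A. {..<s}"]) auto

lemma wsign_sq: "wsign A B * wsign A B = 1"
  unfolding wsign_def by (simp flip: power_mult_distrib)

lemma wsign_cnj: "cnj (wsign A B) = wsign A B"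
  unfolding wsign_def by simp

lemma wsign_Un_left:
  assumes "finite A" "finite B" "A \<inter> B = {}"
  shows "wsign (A \<union> B) C = wsign A C * wsign B C"
proof -
  have e: "{(s, t). s \<in> A \<union> B \<and> t \<in> C \<and> t < s} =
     {(s, t). s \<in> A \<and> t \<in> C \<and> t < s} \<union> {(s, t). s \<in> B \<and> t \<in> C \<and> t < (s::nat)}" by auto
  have "card {(s, t). s \<in> A \<union> B \<and> t \<in> C \<and> t < s} =
     card {(s, t). s \<in> A \<and> t \<in> C \<and> t < s} + card {(s, t). s \<in> B \<and> t \<in> C \<and> t < (s::nat)}"
    unfolding e by (rule card_Un_disjoint) (use assms pairs_finite in auto)
  then show ?thesis unfolding wsign_def by (simp add: power_add)
qed

lemma wsign_Un_right:
  assumes "finite A" "B \<inter> C = {}"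
  shows "wsign A (B \<union> C) = wsign A B * wsign A C"
proof -
  have e: "{(s, t). s \<in> A \<and> t \<in> B \<union> C \<and> t < s} =
     {(s, t). s \<in> A \<and> t \<in> B \<and> t < s} \<union> {(s, t). s \<in> A \<and> t \<in> C \<and> t < (s::nat)}" by auto
  have "card {(s, t). s \<in> A \<and> t \<in> B \<union> C \<and> t < s} =
     card {(s, t). s \<in> A \<and> t \<in> B \<and> t < s} + card {(s, t). s \<in> A \<and> t \<in> C \<and> t < (s::nat)}"
    unfolding e by (rule card_Un_disjoint) (use assms pairs_finite in auto)
  then show ?thesis unfolding wsign_def by (simp add: power_add)
qed

lemma wsign_swap:
  assumes "finite A" "finite B" "A \<inter> B = {}"
  shows "wsign A B * wsign B A = (-1) ^ (card A * card B)"
proof -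
  let ?P1 = "{(s, t). s \<in> A \<and> t \<in> B \<and> t < (s::nat)}"
  let ?P2 = "{(s, t). s \<in> B \<and> t \<in> A \<and> t < (s::nat)}"
  have "prod.swap ` ?P2 = {(s, t). s \<in> A \<and> t \<in> B \<and> s < t}" by auto
  moreover have "card (prod.swap ` ?P2) = card ?P2" by (rule card_image) auto
  moreover have "?P1 \<union> {(s, t). s \<in> A \<and> t \<in> B \<and> s < t} = A \<times> B"
    using assms(3) by (auto simp: linorder_neq_iff)
  moreover have "card (?P1 \<union> {(s, t). s \<in> A \<and> t \<in> B \<and> s < t}) = card ?P1 + card {(s, t). s \<in> A \<and> t \<in> B \<and> s < t}"
    by (rule card_Un_disjoint) (use assms in \<open>auto intro: finite_subset[of _ "A \<times> B"]\<close>)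
  ultimately have "card ?P1 + card ?P2 = card A * card B" by (simp add: card_cartesian_product)
  then show ?thesis unfolding wsign_def by (simp add: power_add[symmetric])
qed

lemma card_Pr: "k < n \<Longrightarrow> card (Pr n k) = 2"
  by (simp add: Pr_def)

lemma wsign_Pr_swap: "k < n \<Longrightarrow> l < n \<Longrightarrow> k \<noteq> l \<Longrightarrow> wsign (Pr n k) (Pr n l) * wsign (Pr n l) (Pr n k) = 1"
proof -
  assume a: "k < n" "l < n" "k \<noteq> l"
  have "wsign (Pr n k) (Pr n l) * wsign (Pr n l) (Pr n k) = (-1) ^ (card (Pr n k) * card (Pr n l))"
    by (rule wsign_swap) (use a in \<open>auto simp: Pr_def\<close>)
  then show ?thesis using a by (simp add: card_Pr)
qed

lemma omega_Pr: "k < n \<Longrightarrow> omega n (Pr n k) = \<i>"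
  unfolding omega_def Pr_def by auto

lemma Pr_inj: "inj_on (Pr n) {..<n}"
  by (auto simp: inj_on_def Pr_def doubleton_eq_iff)

lemma wedge_omega:
  assumes "finite U"
  shows "(omega n \<and>\<^sub>w \<beta>) U = \<i> * (\<Sum>k\<in>{k. k<n \<and> Pr n k \<subseteq> U}. wsign (Pr n k) (U - Pr n k) * \<beta> (U - Pr n k))"
proof -
  let ?K = "{k. k<n \<and> Pr n k \<subseteq> U}"
  have "(omega n \<and>\<^sub>w \<beta>) U = (\<Sum>S\<in>Pr n ` ?K. wsign S (U - S) * omega n S * \<beta> (U - S))"
    unfolding wedge_def
    by (rule sum.mono_neutral_right) (use assms in \<open>auto simp: omega_def Pr_def\<close>)
  also have "\<dots> = (\<Sum>k\<in>?K. wsign (Pr n k) (U - Pr n k) * omega n (Pr n k) * \<beta> (U - Pr n k))"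
    by (rule sum.reindex_cong[OF inj_on_subset[OF Pr_inj]]) auto
  also have "\<dots> = (\<Sum>k\<in>?K. \<i> * (wsign (Pr n k) (U - Pr n k) * \<beta> (U - Pr n k)))"
    by (rule sum.cong) (auto simp: omega_Pr)
  finally show ?thesis by (simp add: sum_distrib_left)
qed

definition phi :: "nat \<Rightarrow> nat \<Rightarrow> form" where "phi n j = (\<lambda>S. if S = {n+j} then 1 else 0)"

lemma wedge_phi:
  assumes "finite T" "n + j \<notin> T"
  shows "(\<alpha> \<and>\<^sub>w phi n j) (insert (n+j) T) = wsign T {n+j} * \<alpha> T"
proof -
  have "(\<alpha> \<and>\<^sub>w phi n j) (insert (n+j) T) = (\<Sum>S\<in>Pow (insert (n+j) T). if S = T then wsign T {n+j} * \<alpha> T else 0)"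
    unfolding wedge_def
  proof (rule sum.cong)
    fix S assume "S \<in> Pow (insert (n+j) T)"
    then have SS: "S \<subseteq> insert (n+j) T" by simp
    have "S = T" if D: "insert (n+j) T - S = {n+j}"
    proof -
      have h1: "n+j \<notin> S" using D by (metis Diff_iff singletonI)
      have h2: "x \<in> S" if "x \<in> T" for x using D assms(2) that by (metis Diff_iff insertI2 singletonD)
      show ?thesis using SS h1 h2 by blast
    qed
    then have "(insert (n+j) T - S = {n+j}) = (S = T)" using assms(2) by blast
    moreover have "S = T \<Longrightarrow> insert (n+j) T - S = {n+j}" using assms(2) by blast
    ultimately show "wsign S (insert (n + j) T - S) * \<alpha> S * phi n j (insert (n + j) T - S) =
        (if S = T then wsign T {n + j} * \<alpha> T else 0)" by (auto simp: phi_def)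
  qed simp
  also have "\<dots> = wsign T {n+j} * \<alpha> T" using assms(1) by (simp add: sum.delta subset_insertI)
  finally show ?thesis .
qed


definition XM :: "nat \<Rightarrow> nat set \<Rightarrow> nat set" where "XM n M = M \<union> (\<lambda>k. n + k) ` M"

definition Lop :: "nat \<Rightarrow> nat set \<Rightarrow> form \<Rightarrow> form" where
  "Lop n M h T = (\<Sum>k\<in>{k\<in>M. Pr n k \<subseteq> T}. wsign (Pr n k) (T - Pr n k) * h (T - Pr n k))"

definition Lam :: "nat \<Rightarrow> nat set \<Rightarrow> form \<Rightarrow> form" where
  "Lam n M h R = (\<Sum>k\<in>{k\<in>M. Pr n k \<inter> R = {}}. wsign (Pr n k) R * h (R \<union> Pr n k))"

lemma finite_XM: "finite M \<Longrightarrow> finite (XM n M)" by (simp add: XM_def)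
lemma Pr_sub_XM: "k \<in> M \<Longrightarrow> Pr n k \<subseteq> XM n M" by (auto simp: XM_def Pr_def)
lemma Pr_disj: "k < n \<Longrightarrow> l < n \<Longrightarrow> k \<noteq> l \<Longrightarrow> Pr n k \<inter> Pr n l = {}" by (auto simp: Pr_def)
lemma finite_Pr: "finite (Pr n k)" by (simp add: Pr_def)

lemma RL1:
  assumes "finite X" "B \<subseteq> X"
  shows "(\<Sum>T\<in>Pow X. if B \<subseteq> T then g T else 0) = (\<Sum>R\<in>Pow (X - B). g (R \<union> B))"
proof -
  have "(\<Sum>T\<in>Pow X. if B \<subseteq> T then g T else 0) = (\<Sum>T\<in>{T\<in>Pow X. B \<subseteq> T}. g T)"
    by (subst sum.inter_filter) (use assms(1) in simp_all)
  also have "\<dots> = (\<Sum>R\<in>Pow (X - B). g (R \<union> B))"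
    by (rule sum.reindex_bij_witness[where j="\<lambda>T. T - B" and i="\<lambda>R. R \<union> B"]) (use assms in \<open>auto simp: Un_absorb2\<close>)
  finally show ?thesis .
qed

lemma RL2:
  assumes "finite X"
  shows "(\<Sum>R\<in>Pow X. if B \<inter> R = {} then g R else 0) = (\<Sum>R\<in>Pow (X - B). g R)"
proof -
  have "(\<Sum>R\<in>Pow X. if B \<inter> R = {} then g R else 0) = (\<Sum>R\<in>{R\<in>Pow X. B \<inter> R = {}}. g R)"
    by (subst sum.inter_filter) (use assms(1) in simp_all)
  also have "{R\<in>Pow X. B \<inter> R = {}} = Pow (X - B)" by auto
  finally show ?thesis .
qed

lemma sq_expand:
  assumes "finite M"
  shows "(\<Sum>k\<in>{k\<in>M. P k}. f k) * cnj (\<Sum>k\<in>{k\<in>M. P k}. f k) =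
    (\<Sum>k\<in>M. \<Sum>l\<in>M. if P k \<and> P l then f k * cnj (f l) else (0::complex))"
  using assms by (simp add: sum.inter_filter[symmetric] sum_product) (auto simp: sum.inter_filter intro!: sum.cong)

lemma count_pairs:
  assumes "finite M" "M \<subseteq> {..<n}" "R \<subseteq> XM n M"
  shows "(\<Sum>k\<in>M. (if Pr n k \<inter> R = {} then 1 else 0) - (if Pr n k \<subseteq> R then 1 else 0) :: int) = int (card M) - int (card R)"
proof -
  have pt: "(if Pr n k \<inter> R = {} then 1 else 0) - (if Pr n k \<subseteq> R then 1 else 0) = 1 - int (card (R \<inter> Pr n k))"
    if "k \<in> M" for k
  proof -
    have kn: "k \<noteq> n + k" using that assms(2) by auto
    show ?thesis
    proof (cases "k \<in> R"; cases "n + k \<in> R")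
      assume "k \<in> R" "n + k \<in> R" then have "R \<inter> Pr n k = {k, n+k}" by (auto simp: Pr_def)
      then show ?thesis using kn \<open>k \<in> R\<close> \<open>n + k \<in> R\<close> by (auto simp: Pr_def)
    next
      assume "k \<in> R" "n + k \<notin> R" then have "R \<inter> Pr n k = {k}" by (auto simp: Pr_def)
      then show ?thesis using kn \<open>k \<in> R\<close> \<open>n + k \<notin> R\<close> by (auto simp: Pr_def)
    next
      assume "k \<notin> R" "n + k \<in> R" then have "R \<inter> Pr n k = {n+k}" by (auto simp: Pr_def)
      then show ?thesis using kn \<open>k \<notin> R\<close> \<open>n + k \<in> R\<close> by (auto simp: Pr_def)
    next
      assume "k \<notin> R" "n + k \<notin> R" then have "R \<inter> Pr n k = {}" by (auto simp: Pr_def)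
      then show ?thesis using kn \<open>k \<notin> R\<close> \<open>n + k \<notin> R\<close> by (auto simp: Pr_def)
    qed
  qed
  have RU: "R = (\<Union>k\<in>M. R \<inter> Pr n k)" using assms(3) by (auto simp: XM_def Pr_def)
  have "card R = (\<Sum>k\<in>M. card (R \<inter> Pr n k))"
    apply (subst RU)
    apply (rule card_UN_disjoint)
    using assms(1) apply simp
     apply (simp add: finite_Pr)
    using assms(2) Pr_disj by blast
  then have "int (card R) = (\<Sum>k\<in>M. int (card (R \<inter> Pr n k)))" by simp
  moreover have "(\<Sum>k\<in>M. (if Pr n k \<inter> R = {} then 1 else 0) - (if Pr n k \<subseteq> R then 1 else 0) :: int)
      = (\<Sum>k\<in>M. 1 - int (card (R \<inter> Pr n k)))" by (rule sum.cong) (simp_all add: pt)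
  ultimately show ?thesis by (simp add: sum_subtractf)
qed


lemma norm_identity:
  assumes fin: "finite M" and Mn: "M \<subseteq> {..<n}"
  shows "(\<Sum>T\<in>Pow (XM n M). Lop n M h T * cnj (Lop n M h T)) =
    (\<Sum>R\<in>Pow (XM n M). Lam n M h R * cnj (Lam n M h R)) +
    (\<Sum>R\<in>Pow (XM n M). of_int (int (card M) - int (card R)) * (h R * cnj (h R)))"
proof -
  define X where "X = XM n M"
  have finX: "finite X" using fin by (simp add: X_def finite_XM)
  define a where "a T k = wsign (Pr n k) (T - Pr n k) * h (T - Pr n k)" for T k
  define b where "b R k = wsign (Pr n k) R * h (R \<union> Pr n k)" for R k
  define F where "F T k l = (if Pr n k \<subseteq> T \<and> Pr n l \<subseteq> T then a T k * cnj (a T l) else 0)" for T k l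
  define G where "G R k l = (if Pr n k \<inter> R = {} \<and> Pr n l \<inter> R = {} then b R k * cnj (b R l) else 0)" for R k l
  define v where "v R = h R * cnj (h R)" for R
  define D where "D k = (\<Sum>R\<in>Pow X. if Pr n k \<inter> R = {} then v R else 0) - (\<Sum>R\<in>Pow X. if Pr n k \<subseteq> R then v R else 0)" for k
  have L1: "(\<Sum>T\<in>Pow X. Lop n M h T * cnj (Lop n M h T)) = (\<Sum>k\<in>M. \<Sum>l\<in>M. \<Sum>T\<in>Pow X. F T k l)"
  proof -
    have "(\<Sum>T\<in>Pow X. Lop n M h T * cnj (Lop n M h T)) = (\<Sum>T\<in>Pow X. \<Sum>k\<in>M. \<Sum>l\<in>M. F T k l)"
      unfolding Lop_def F_def a_def by (rule sum.cong[OF refl], rule sq_expand[OF fin])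
    also have "\<dots> = (\<Sum>k\<in>M. \<Sum>T\<in>Pow X. \<Sum>l\<in>M. F T k l)" by (rule sum.swap)
    also have "\<dots> = (\<Sum>k\<in>M. \<Sum>l\<in>M. \<Sum>T\<in>Pow X. F T k l)" by (rule sum.cong[OF refl], rule sum.swap)
    finally show ?thesis .
  qed
  have L2: "(\<Sum>R\<in>Pow X. Lam n M h R * cnj (Lam n M h R)) = (\<Sum>k\<in>M. \<Sum>l\<in>M. \<Sum>R\<in>Pow X. G R l k)"
  proof -
    have "(\<Sum>R\<in>Pow X. Lam n M h R * cnj (Lam n M h R)) = (\<Sum>R\<in>Pow X. \<Sum>k\<in>M. \<Sum>l\<in>M. G R k l)"
      unfolding Lam_def G_def b_def by (rule sum.cong[OF refl], rule sq_expand[OF fin])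
    also have "\<dots> = (\<Sum>k\<in>M. \<Sum>R\<in>Pow X. \<Sum>l\<in>M. G R k l)" by (rule sum.swap)
    also have "\<dots> = (\<Sum>k\<in>M. \<Sum>l\<in>M. \<Sum>R\<in>Pow X. G R k l)" by (rule sum.cong[OF refl], rule sum.swap)
    also have "\<dots> = (\<Sum>k\<in>M. \<Sum>l\<in>M. \<Sum>R\<in>Pow X. G R l k)" by (rule sum.swap)
    finally show ?thesis .
  qed
  have offdiag: "(\<Sum>T\<in>Pow X. F T k l) = (\<Sum>R\<in>Pow X. G R l k)" if kl: "k \<in> M" "l \<in> M" "k \<noteq> l" for k l
  proof -
    have kn: "k < n" "l < n" using kl Mn by auto
    have disj: "Pr n k \<inter> Pr n l = {}" using Pr_disj kn kl by blast
    have BX: "Pr n k \<union> Pr n l \<subseteq> X" using kl by (simp add: X_def Pr_sub_XM)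
    have "(\<Sum>T\<in>Pow X. F T k l) = (\<Sum>T\<in>Pow X. if Pr n k \<union> Pr n l \<subseteq> T then a T k * cnj (a T l) else 0)"
      unfolding F_def by (rule sum.cong) auto
    also have "\<dots> = (\<Sum>R\<in>Pow (X - (Pr n k \<union> Pr n l)). a (R \<union> (Pr n k \<union> Pr n l)) k * cnj (a (R \<union> (Pr n k \<union> Pr n l)) l))"
      by (rule RL1[OF finX BX])
    also have "\<dots> = (\<Sum>R\<in>Pow (X - (Pr n k \<union> Pr n l)). b R l * cnj (b R k))"
    proof (rule sum.cong[OF refl])
      fix R assume R: "R \<in> Pow (X - (Pr n k \<union> Pr n l))"
      have e1: "R \<union> (Pr n k \<union> Pr n l) - Pr n k = R \<union> Pr n l" using R disj by auto
      have e2: "R \<union> (Pr n k \<union> Pr n l) - Pr n l = R \<union> Pr n k" using R disj by auto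
      have w1: "wsign (Pr n k) (R \<union> Pr n l) = wsign (Pr n k) R * wsign (Pr n k) (Pr n l)"
        by (rule wsign_Un_right) (use R in \<open>auto simp: finite_Pr\<close>)
      have w2: "wsign (Pr n l) (R \<union> Pr n k) = wsign (Pr n l) R * wsign (Pr n l) (Pr n k)"
        by (rule wsign_Un_right) (use R in \<open>auto simp: finite_Pr\<close>)
      have w3: "wsign (Pr n k) (Pr n l) * wsign (Pr n l) (Pr n k) = 1"
        using wsign_Pr_swap kn kl(3) by blast
      have "a (R \<union> (Pr n k \<union> Pr n l)) k * cnj (a (R \<union> (Pr n k \<union> Pr n l)) l)
          = (wsign (Pr n k) (Pr n l) * wsign (Pr n l) (Pr n k)) * (b R l * cnj (b R k))"
        unfolding a_def b_def e1 e2 w1 w2 by (simp add: wsign_cnj mult_ac)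
      then show "a (R \<union> (Pr n k \<union> Pr n l)) k * cnj (a (R \<union> (Pr n k \<union> Pr n l)) l) = b R l * cnj (b R k)"
        using w3 by simp
    qed
    also have "\<dots> = (\<Sum>R\<in>Pow X. if (Pr n k \<union> Pr n l) \<inter> R = {} then b R l * cnj (b R k) else 0)"
      by (rule RL2[OF finX, symmetric])
    also have "\<dots> = (\<Sum>R\<in>Pow X. G R l k)"
      unfolding G_def by (rule sum.cong) auto
    finally show ?thesis .
  qed
  have diag: "(\<Sum>T\<in>Pow X. F T k k) - (\<Sum>R\<in>Pow X. G R k k) = D k" if k: "k \<in> M" for k
  proof -
    have BX: "Pr n k \<subseteq> X" using k by (simp add: X_def Pr_sub_XM)
    have "(\<Sum>T\<in>Pow X. F T k k) = (\<Sum>T\<in>Pow X. if Pr n k \<subseteq> T then a T k * cnj (a T k) else 0)"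
      unfolding F_def by simp
    also have "\<dots> = (\<Sum>R\<in>Pow (X - Pr n k). a (R \<union> Pr n k) k * cnj (a (R \<union> Pr n k) k))"
      by (rule RL1[OF finX BX])
    also have "\<dots> = (\<Sum>R\<in>Pow (X - Pr n k). v R)"
    proof (rule sum.cong[OF refl])
      fix R assume R: "R \<in> Pow (X - Pr n k)"
      have e1: "R \<union> Pr n k - Pr n k = R" using R by auto
      have "a (R \<union> Pr n k) k * cnj (a (R \<union> Pr n k) k) = (wsign (Pr n k) R * wsign (Pr n k) R) * v R"
        unfolding a_def v_def e1 by (simp add: wsign_cnj mult_ac)
      then show "a (R \<union> Pr n k) k * cnj (a (R \<union> Pr n k) k) = v R" by (simp add: wsign_sq)
    qed
    also have "\<dots> = (\<Sum>R\<in>Pow X. if Pr n k \<inter> R = {} then v R else 0)"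
      by (rule RL2[OF finX, symmetric])
    finally have f1: "(\<Sum>T\<in>Pow X. F T k k) = (\<Sum>R\<in>Pow X. if Pr n k \<inter> R = {} then v R else 0)" .
    have "(\<Sum>R\<in>Pow X. G R k k) = (\<Sum>R\<in>Pow X. if Pr n k \<inter> R = {} then b R k * cnj (b R k) else 0)"
      unfolding G_def by simp
    also have "\<dots> = (\<Sum>R\<in>Pow (X - Pr n k). b R k * cnj (b R k))"
      by (rule RL2[OF finX])
    also have "\<dots> = (\<Sum>R\<in>Pow (X - Pr n k). v (R \<union> Pr n k))"
    proof (rule sum.cong[OF refl])
      fix R
      have "b R k * cnj (b R k) = (wsign (Pr n k) R * wsign (Pr n k) R) * v (R \<union> Pr n k)"
        unfolding b_def v_def by (simp add: wsign_cnj mult_ac)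
      then show "b R k * cnj (b R k) = v (R \<union> Pr n k)" by (simp add: wsign_sq)
    qed
    also have "\<dots> = (\<Sum>R\<in>Pow X. if Pr n k \<subseteq> R then v R else 0)"
      by (rule RL1[OF finX BX, symmetric])
    finally show ?thesis using f1 unfolding D_def by simp
  qed
  have "(\<Sum>k\<in>M. \<Sum>l\<in>M. \<Sum>T\<in>Pow X. F T k l) - (\<Sum>k\<in>M. \<Sum>l\<in>M. \<Sum>R\<in>Pow X. G R l k)
      = (\<Sum>k\<in>M. \<Sum>l\<in>M. (\<Sum>T\<in>Pow X. F T k l) - (\<Sum>R\<in>Pow X. G R l k))"
    by (simp add: sum_subtractf)
  also have "\<dots> = (\<Sum>k\<in>M. \<Sum>l\<in>M. if l = k then D k else 0)"
    by (rule sum.cong[OF refl], rule sum.cong[OF refl]) (auto simp: offdiag diag)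
  also have "\<dots> = (\<Sum>k\<in>M. D k)" using fin by simp
  also have "\<dots> = (\<Sum>k\<in>M. \<Sum>R\<in>Pow X. v R * of_int ((if Pr n k \<inter> R = {} then 1 else 0) - (if Pr n k \<subseteq> R then 1 else 0)))"
    unfolding D_def by (rule sum.cong[OF refl]) (simp add: sum_subtractf[symmetric] of_int_diff, rule sum.cong, auto)
  also have "\<dots> = (\<Sum>R\<in>Pow X. \<Sum>k\<in>M. v R * of_int ((if Pr n k \<inter> R = {} then 1 else 0) - (if Pr n k \<subseteq> R then 1 else 0)))"
    by (rule sum.swap)
  also have "\<dots> = (\<Sum>R\<in>Pow X. of_int (int (card M) - int (card R)) * v R)"
  proof (rule sum.cong[OF refl])
    fix R assume R: "R \<in> Pow X"
    have "(\<Sum>k\<in>M. v R * of_int ((if Pr n k \<inter> R = {} then 1 else 0) - (if Pr n k \<subseteq> R then 1 else 0)))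
        = v R * of_int (\<Sum>k\<in>M. (if Pr n k \<inter> R = {} then 1 else 0) - (if Pr n k \<subseteq> R then 1 else 0) :: int)"
      by (simp add: sum_distrib_left)
    also have "\<dots> = v R * of_int (int (card M) - int (card R))"
      using count_pairs[OF fin Mn, of R] R by (simp add: X_def)
    finally show "(\<Sum>k\<in>M. v R * of_int ((if Pr n k \<inter> R = {} then 1 else 0) - (if Pr n k \<subseteq> R then 1 else 0)))
        = of_int (int (card M) - int (card R)) * v R" by simp
  qed
  finally show ?thesis using L1 L2 unfolding X_def v_def by (simp add: algebra_simps)
qed




lemma L_inj:
  assumes fin: "finite M" and Mn: "M \<subseteq> {..<n}"
    and L0: "\<forall>T\<in>Pow (XM n M). Lop n M h T = 0"
    and supp: "\<forall>R\<in>Pow (XM n M). h R \<noteq> 0 \<longrightarrow> card R < card M"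
    and R: "R \<in> Pow (XM n M)"
  shows "h R = 0"
proof (rule ccontr)
  assume hR: "h R \<noteq> 0"
  define X where "X = XM n M"
  have finX: "finite X" using fin by (simp add: X_def finite_XM)
  define S1 where "S1 = (\<Sum>R\<in>Pow X. (norm (Lam n M h R))\<^sup>2)"
  define c where "c R = real_of_int (int (card M) - int (card R))" for R :: "nat set"
  define S2 where "S2 = (\<Sum>R\<in>Pow X. c R * (norm (h R))\<^sup>2)"
  have "(\<Sum>T\<in>Pow X. Lop n M h T * cnj (Lop n M h T)) = 0" using L0 by (simp add: X_def)
  then have "0 = (\<Sum>R\<in>Pow X. Lam n M h R * cnj (Lam n M h R)) +
    (\<Sum>R\<in>Pow X. of_int (int (card M) - int (card R)) * (h R * cnj (h R)))"
    using norm_identity[OF fin Mn, of h] by (simp add: X_def)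
  also have "\<dots> = complex_of_real S1 + complex_of_real S2"
    unfolding S1_def S2_def c_def by (simp add: complex_norm_square[symmetric])
  finally have "S1 + S2 = 0" by (metis of_real_0 of_real_add of_real_eq_iff)
  moreover have "S1 \<ge> 0" unfolding S1_def by (rule sum_nonneg) simp
  moreover have nn: "\<forall>R\<in>Pow X. c R * (norm (h R))\<^sup>2 \<ge> 0"
  proof
    fix R assume "R \<in> Pow X"
    show "c R * (norm (h R))\<^sup>2 \<ge> 0"
    proof (cases "h R = 0")
      case False
      then have "card R < card M" using supp \<open>R \<in> Pow X\<close> by (simp add: X_def)
      then show ?thesis by (simp add: c_def)
    qed simp
  qed
  moreover have "S2 \<ge> 0" unfolding S2_def using nn by (intro sum_nonneg) auto
  ultimately have "S2 = 0" by linarith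
  have RX: "R \<in> Pow X" using R by (simp add: X_def)
  have "(\<Sum>R\<in>Pow X. c R * (norm (h R))\<^sup>2) = 0 \<longleftrightarrow> (\<forall>R\<in>Pow X. c R * (norm (h R))\<^sup>2 = 0)"
    by (rule sum_nonneg_eq_0_iff) (use finX nn in auto)
  then have "\<forall>R\<in>Pow X. c R * (norm (h R))\<^sup>2 = 0"
    using \<open>S2 = 0\<close> unfolding S2_def by blast
  then have "c R * (norm (h R))\<^sup>2 = 0" using RX by blast
  moreover have "card R < card M" using supp R hR by blast
  ultimately show False using hR by (simp add: c_def)
qed

lemma hyp_eps:
  assumes j: "j < n" and H: "\<alpha> \<and>\<^sub>w phi n j = omega n \<and>\<^sub>w \<beta>"
    and T: "finite T" "j \<notin> T" "n + j \<notin> T"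
  shows "\<alpha> T = \<i> * (\<Sum>k\<in>{k. k<n \<and> Pr n k \<subseteq> T}. wsign (Pr n k) (T - Pr n k) *
      (wsign (T - Pr n k) {n+j} * \<beta> (insert (n+j) (T - Pr n k))))"
proof -
  let ?U = "insert (n+j) T"
  have 1: "wsign T {n+j} * \<alpha> T = \<i> * (\<Sum>k\<in>{k. k<n \<and> Pr n k \<subseteq> ?U}. wsign (Pr n k) (?U - Pr n k) * \<beta> (?U - Pr n k))"
  proof -
    have "wsign T {n+j} * \<alpha> T = (\<alpha> \<and>\<^sub>w phi n j) ?U" by (rule wedge_phi[OF T(1) T(3), symmetric])
    also have "\<dots> = (omega n \<and>\<^sub>w \<beta>) ?U" using H by (rule fun_cong)
    also have "\<dots> = \<i> * (\<Sum>k\<in>{k. k<n \<and> Pr n k \<subseteq> ?U}. wsign (Pr n k) (?U - Pr n k) * \<beta> (?U - Pr n k))"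
      by (rule wedge_omega) (use T(1) in simp)
    finally show ?thesis .
  qed
  have K: "{k. k<n \<and> Pr n k \<subseteq> ?U} = {k. k<n \<and> Pr n k \<subseteq> T}"
    using T(2) by (auto simp: Pr_def)
  have trm: "wsign T {n+j} * (wsign (Pr n k) (?U - Pr n k) * \<beta> (?U - Pr n k)) =
      wsign (Pr n k) (T - Pr n k) * (wsign (T - Pr n k) {n+j} * \<beta> (insert (n+j) (T - Pr n k)))"
    if k: "k \<in> {k. k<n \<and> Pr n k \<subseteq> T}" for k
  proof -
    have kT: "k \<in> T" using k by (auto simp: Pr_def)
    then have kj: "k \<noteq> j" using T(2) by auto
    have e1: "?U - Pr n k = insert (n+j) (T - Pr n k)" using kj k by (auto simp: Pr_def)
    have w1: "wsign (Pr n k) (insert (n+j) (T - Pr n k)) = wsign (Pr n k) (T - Pr n k) * wsign (Pr n k) {n+j}"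
      using wsign_Un_right[of "Pr n k" "T - Pr n k" "{n+j}"] T(3) by (simp add: finite_Pr)
    have TT: "T = (T - Pr n k) \<union> Pr n k" using k by auto
    have "wsign ((T - Pr n k) \<union> Pr n k) {n+j} = wsign (T - Pr n k) {n+j} * wsign (Pr n k) {n+j}"
      by (rule wsign_Un_left) (auto simp: finite_Pr T(1))
    then have w2: "wsign T {n+j} = wsign (T - Pr n k) {n+j} * wsign (Pr n k) {n+j}"
      using TT by simp
    have "wsign T {n+j} * (wsign (Pr n k) (?U - Pr n k) * \<beta> (?U - Pr n k)) =
      (wsign (Pr n k) {n+j} * wsign (Pr n k) {n+j}) * (wsign (Pr n k) (T - Pr n k) * (wsign (T - Pr n k) {n+j} * \<beta> (insert (n+j) (T - Pr n k))))"
      unfolding e1 w1 w2 by (simp only: mult_ac)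
    then show ?thesis by (simp only: wsign_sq mult_1_left)
  qed
  have "\<alpha> T = wsign T {n+j} * (wsign T {n+j} * \<alpha> T)" by (simp add: wsign_sq mult.assoc[symmetric])
  also have "\<dots> = \<i> * (\<Sum>k\<in>{k. k<n \<and> Pr n k \<subseteq> T}. wsign T {n+j} * (wsign (Pr n k) (?U - Pr n k) * \<beta> (?U - Pr n k)))"
    unfolding 1 K by (simp only: mult.left_commute[of "wsign T {n+j}" \<i>] sum_distrib_left)
  also have "\<dots> = \<i> * (\<Sum>k\<in>{k. k<n \<and> Pr n k \<subseteq> T}. wsign (Pr n k) (T - Pr n k) *
      (wsign (T - Pr n k) {n+j} * \<beta> (insert (n+j) (T - Pr n k))))"
    by (rule arg_cong[where f="\<lambda>x. \<i> * x"], rule sum.cong[OF refl], rule trm)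
  finally show ?thesis .
qed

lemma deg_Pr:
  assumes "finite T" "k < n" "Pr n k \<subseteq> T"
  shows "card (T \<inter> {..<n}) = Suc (card ((T - Pr n k) \<inter> {..<n}))"
    "card (T \<inter> {n..<2*n}) = Suc (card ((T - Pr n k) \<inter> {n..<2*n}))"
proof -
  have e: "(T - Pr n k) \<inter> {..<n} = (T \<inter> {..<n}) - {k}" by (auto simp: Pr_def)
  have kin: "k \<in> T \<inter> {..<n}" using assms by (auto simp: Pr_def)
  show "card (T \<inter> {..<n}) = Suc (card ((T - Pr n k) \<inter> {..<n}))"
    unfolding e by (rule card_Suc_Diff1[symmetric]) (use assms(1) kin in auto)
  have e2: "(T - Pr n k) \<inter> {n..<2*n} = (T \<inter> {n..<2*n}) - {n+k}" using assms(2) by (auto simp: Pr_def)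
  have kin2: "n + k \<in> T \<inter> {n..<2*n}" using assms by (auto simp: Pr_def)
  show "card (T \<inter> {n..<2*n}) = Suc (card ((T - Pr n k) \<inter> {n..<2*n}))"
    unfolding e2 by (rule card_Suc_Diff1[symmetric]) (use assms(1) kin2 in auto)
qed

lemma card_split:
  fixes S :: "nat set"
  assumes "S \<subseteq> {..<2*n}"
  shows "card S = card (S \<inter> {..<n}) + card (S \<inter> {n..<2*n})"
proof -
  have fin: "finite S" using finite_subset[OF assms] by simp
  have eq: "S = (S \<inter> {..<n}) \<union> (S \<inter> {n..<2*n})" using assms by auto
  have "card S = card ((S \<inter> {..<n}) \<union> (S \<inter> {n..<2*n}))" by (rule arg_cong[OF eq])
  also have "\<dots> = card (S \<inter> {..<n}) + card (S \<inter> {n..<2*n})"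
    by (rule card_Un_disjoint) (use fin in auto)
  finally show ?thesis .
qed



lemma free_coord:
  fixes U :: "nat set"
  assumes "U \<subseteq> {..<2*n}" "card U < n"
  shows "\<exists>j<n. j \<notin> U \<and> n + j \<notin> U"
proof (rule ccontr)
  assume "\<not> (\<exists>j<n. j \<notin> U \<and> n + j \<notin> U)"
  then have all: "\<forall>j<n. j \<in> U \<or> n + j \<in> U" by blast
  have fin: "finite U" using finite_subset[OF assms(1)] by simp
  have "{..<n} \<subseteq> (U \<inter> {..<n}) \<union> (\<lambda>x. x - n) ` (U \<inter> {n..<2*n})"
  proof
    fix j assume "j \<in> {..<n}"
    then have "j < n" by simp
    with all have "j \<in> U \<or> n + j \<in> U" by blast
    then show "j \<in> (U \<inter> {..<n}) \<union> (\<lambda>x. x - n) ` (U \<inter> {n..<2*n})"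
    proof
      assume "j \<in> U" then show ?thesis using \<open>j < n\<close> by blast
    next
      assume "n + j \<in> U"
      moreover have "n + j \<in> {n..<2*n}" using \<open>j < n\<close> by simp
      moreover have "j = (\<lambda>x. x - n) (n + j)" by simp
      ultimately show ?thesis by blast
    qed
  qed
  then have "card {..<n} \<le> card ((U \<inter> {..<n}) \<union> (\<lambda>x. x - n) ` (U \<inter> {n..<2*n}))"
    by (rule card_mono[rotated]) (use fin in simp)
  also have "\<dots> \<le> card (U \<inter> {..<n}) + card ((\<lambda>x. x - n) ` (U \<inter> {n..<2*n}))" by (rule card_Un_le)
  also have "\<dots> \<le> card (U \<inter> {..<n}) + card (U \<inter> {n..<2*n})" using card_image_le[of "U \<inter> {n..<2*n}" "\<lambda>x. x - n"] fin by simp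
  also have "\<dots> = card U" using card_split[OF assms(1)] by simp
  finally show False using assms(2) by simp
qed

lemma in_XM:
  assumes "R \<subseteq> {..<2*n}" "\<forall>x\<in>R. x < n \<longrightarrow> x \<in> M" "\<forall>x\<in>R. n \<le> x \<longrightarrow> x - n \<in> M"
  shows "R \<subseteq> XM n M"
proof
  fix x assume x: "x \<in> R"
  show "x \<in> XM n M"
  proof (cases "x < n")
    case True then show ?thesis using x assms(2) by (simp add: XM_def)
  next
    case False
    then have "x - n \<in> M" using x assms(3) by simp
    moreover have "x = n + (x - n)" using False by simp
    ultimately show ?thesis unfolding XM_def by blast
  qed
qed

lemma glue:
  fixes p q :: int and E :: "nat \<Rightarrow> form"
  assumes pq: "p + q \<le> int n"
    and hyp: "\<And>j T. j < n \<Longrightarrow> finite T \<Longrightarrow> j \<notin> T \<Longrightarrow> n + j \<notin> T \<Longrightarrow>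
       \<alpha> T = \<i> * (\<Sum>k\<in>{k. k<n \<and> Pr n k \<subseteq> T}. wsign (Pr n k) (T - Pr n k) * E j (T - Pr n k))"
    and jk: "j < n" "k < n" "j \<noteq> k"
    and R: "R \<subseteq> {..<2*n}" "int (card (R \<inter> {..<n})) = p - 1" "int (card (R \<inter> {n..<2*n})) = q - 2"
      "j \<notin> R" "n + j \<notin> R" "k \<notin> R" "n + k \<notin> R"
  shows "E j R = E k R"
proof -
  define M where "M = {..<n} - {j, k}"
  have finM: "finite M" by (simp add: M_def)
  have Mn: "M \<subseteq> {..<n}" by (auto simp: M_def)
  have cardM: "card M = n - 2" using jk by (simp add: M_def card_Diff_subset)
  define dg where "dg S \<longleftrightarrow> S \<subseteq> {..<2*n} \<and> int (card (S \<inter> {..<n})) = p - 1 \<and> int (card (S \<inter> {n..<2*n})) = q - 2" for S :: "nat set"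
  define h where "h S = (if dg S then E j S - E k S else 0)" for S
  have XMsub: "XM n M \<subseteq> {..<2*n}" by (auto simp: XM_def M_def)
  have jkX: "j \<notin> XM n M" "n + j \<notin> XM n M" "k \<notin> XM n M" "n + k \<notin> XM n M"
    using jk by (auto simp: XM_def M_def)
  have m1: "\<forall>x\<in>R. x < n \<longrightarrow> x \<in> M" using R(4,6) unfolding M_def by auto
  have m2: "\<forall>x\<in>R. n \<le> x \<longrightarrow> x - n \<in> M"
  proof (intro ballI impI)
    fix x assume x: "x \<in> R" "n \<le> x"
    then have "x < 2*n" using R(1) by auto
    moreover have "x \<noteq> n + j" "x \<noteq> n + k" using x R(5,7) by auto
    ultimately show "x - n \<in> M" using x(2) unfolding M_def by auto
  qed
  have RX: "R \<in> Pow (XM n M)" using in_XM[OF R(1) m1 m2] by simp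
  have L0: "\<forall>T\<in>Pow (XM n M). Lop n M h T = 0"
  proof
    fix T assume T: "T \<in> Pow (XM n M)"
    have finT: "finite T" using T finite_XM[OF finM] finite_subset by blast
    have Tsub: "T \<subseteq> {..<2*n}" using T XMsub by blast
    have jT: "j \<notin> T" "n + j \<notin> T" "k \<notin> T" "n + k \<notin> T" using T jkX by blast+
    have idx: "{l\<in>M. Pr n l \<subseteq> T} = {l. l<n \<and> Pr n l \<subseteq> T}"
      using jT by (auto simp: M_def Pr_def)
    show "Lop n M h T = 0"
    proof (cases "int (card (T \<inter> {..<n})) = p \<and> int (card (T \<inter> {n..<2*n})) = q - 1")
      case True
      have "Lop n M h T = (\<Sum>l\<in>{l. l<n \<and> Pr n l \<subseteq> T}.
          wsign (Pr n l) (T - Pr n l) * E j (T - Pr n l) - wsign (Pr n l) (T - Pr n l) * E k (T - Pr n l))"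
        unfolding Lop_def idx
      proof (rule sum.cong[OF refl])
        fix l assume l: "l \<in> {l. l<n \<and> Pr n l \<subseteq> T}"
        have "dg (T - Pr n l)" unfolding dg_def
          using deg_Pr[OF finT, of l n] l True Tsub by auto
        then show "wsign (Pr n l) (T - Pr n l) * h (T - Pr n l) =
          wsign (Pr n l) (T - Pr n l) * E j (T - Pr n l) - wsign (Pr n l) (T - Pr n l) * E k (T - Pr n l)"
          by (simp add: h_def right_diff_distrib)
      qed
      also have "\<dots> = (\<Sum>l\<in>{l. l<n \<and> Pr n l \<subseteq> T}. wsign (Pr n l) (T - Pr n l) * E j (T - Pr n l)) -
          (\<Sum>l\<in>{l. l<n \<and> Pr n l \<subseteq> T}. wsign (Pr n l) (T - Pr n l) * E k (T - Pr n l))"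
        by (rule sum_subtractf)
      also have "\<dots> = 0"
        using hyp[OF jk(1) finT jT(1,2)] hyp[OF jk(2) finT jT(3,4)] by simp
      finally show ?thesis .
    next
      case False
      have "\<forall>l\<in>{l\<in>M. Pr n l \<subseteq> T}. h (T - Pr n l) = 0"
      proof
        fix l assume l: "l \<in> {l\<in>M. Pr n l \<subseteq> T}"
        then have "l < n" "Pr n l \<subseteq> T" using Mn by auto
        then have "\<not> dg (T - Pr n l)" unfolding dg_def
          using deg_Pr[OF finT, of l n] False by auto
        then show "h (T - Pr n l) = 0" by (simp add: h_def)
      qed
      then show ?thesis unfolding Lop_def by simp
    qed
  qed
  have supp: "\<forall>S\<in>Pow (XM n M). h S \<noteq> 0 \<longrightarrow> card S < card M"
  proof (intro ballI impI)
    fix S assume S: "S \<in> Pow (XM n M)" "h S \<noteq> 0"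
    then have "dg S" by (auto simp: h_def split: if_splits)
    then have "int (card S) = p + q - 3" unfolding dg_def using card_split[of S n] by simp
    then show "card S < card M" using pq cardM jk by linarith
  qed
  have "h R = 0" by (rule L_inj[OF finM Mn L0 supp RX])
  moreover have "dg R" using R unfolding dg_def by blast
  ultimately show ?thesis by (simp add: h_def)
qed



theorem lemma2p4:
  fixes n :: nat and p q :: int and \<alpha> :: form
  assumes "q \<ge> 2" and "p + q \<le> int n"
    and "\<alpha> \<in> V n p (q - 1)"
    and "\<forall>\<phi>\<in>V n 0 1. \<exists>\<beta>\<in>V n (p - 1) (q - 1). \<alpha> \<and>\<^sub>w \<phi> = omega n \<and>\<^sub>w \<beta>"
  shows "\<exists>\<gamma>\<in>V n (p - 1) (q - 2). \<alpha> = omega n \<and>\<^sub>w \<gamma>"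
proof -
  have \<alpha>V: "S \<subseteq> {..<2*n} \<and> int (card (S \<inter> {..<n})) = p \<and> int (card (S \<inter> {n..<2*n})) = q - 1"
    if "\<alpha> S \<noteq> 0" for S using assms(3) that by (simp add: V_def)
  have phiV: "phi n j \<in> V n 0 1" if "j < n" for j
    using that by (auto simp: V_def phi_def)
  have "\<forall>j. \<exists>\<beta>. j < n \<longrightarrow> \<alpha> \<and>\<^sub>w phi n j = omega n \<and>\<^sub>w \<beta>"
    using assms(4) phiV by blast
  then obtain B where B: "\<forall>j. j < n \<longrightarrow> \<alpha> \<and>\<^sub>w phi n j = omega n \<and>\<^sub>w B j"
    by (metis choice)
  define E where "E j R = wsign R {n+j} * B j (insert (n+j) R)" for j R
  have hyp: "\<alpha> T = \<i> * (\<Sum>k\<in>{k. k<n \<and> Pr n k \<subseteq> T}. wsign (Pr n k) (T - Pr n k) * E j (T - Pr n k))"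
    if "j < n" "finite T" "j \<notin> T" "n + j \<notin> T" for j T
    unfolding E_def by (rule hyp_eps[OF that(1) _ that(2-4)]) (use B that(1) in blast)
  define dg where "dg S \<longleftrightarrow> S \<subseteq> {..<2*n} \<and> int (card (S \<inter> {..<n})) = p - 1 \<and> int (card (S \<inter> {n..<2*n})) = q - 2" for S :: "nat set"
  define \<gamma> where "\<gamma> S = (if dg S then E (LEAST j. j < n \<and> j \<notin> S \<and> n + j \<notin> S) S else 0)" for S
  have \<gamma>V: "\<gamma> \<in> V n (p - 1) (q - 2)" by (auto simp: V_def \<gamma>_def dg_def)
  have "\<alpha> = omega n \<and>\<^sub>w \<gamma>"
  proof (rule ext)
    fix U
    show "\<alpha> U = (omega n \<and>\<^sub>w \<gamma>) U"
    proof (cases "finite U")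
      case False
      have "\<alpha> U = 0"
      proof (rule ccontr)
        assume "\<alpha> U \<noteq> 0"
        then have "U \<subseteq> {..<2*n}" using \<alpha>V by blast
        then show False using False finite_subset by blast
      qed
      moreover have "(omega n \<and>\<^sub>w \<gamma>) U = 0" using False by (simp add: wedge_def)
      ultimately show ?thesis by simp
    next
      case True
      have W: "(omega n \<and>\<^sub>w \<gamma>) U = \<i> * (\<Sum>k\<in>{k. k<n \<and> Pr n k \<subseteq> U}. wsign (Pr n k) (U - Pr n k) * \<gamma> (U - Pr n k))"
        by (rule wedge_omega[OF True])
      show ?thesis
      proof (cases "U \<subseteq> {..<2*n} \<and> int (card (U \<inter> {..<n})) = p \<and> int (card (U \<inter> {n..<2*n})) = q - 1")
        case dU: True
        have "int (card U) = p + q - 1" using card_split[of U n] dU by simp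
        then have cU: "card U < n" using assms(2) by linarith
        obtain j where j: "j < n" "j \<notin> U" "n + j \<notin> U" using free_coord[of U n] dU cU by blast
        have "\<alpha> U = \<i> * (\<Sum>k\<in>{k. k<n \<and> Pr n k \<subseteq> U}. wsign (Pr n k) (U - Pr n k) * E j (U - Pr n k))"
          by (rule hyp[OF j(1) True j(2,3)])
        also have "\<dots> = \<i> * (\<Sum>k\<in>{k. k<n \<and> Pr n k \<subseteq> U}. wsign (Pr n k) (U - Pr n k) * \<gamma> (U - Pr n k))"
        proof (rule arg_cong[where f="\<lambda>x. \<i> * x"], rule sum.cong[OF refl])
          fix k assume k: "k \<in> {k. k<n \<and> Pr n k \<subseteq> U}"
          let ?R = "U - Pr n k"
          have dR: "dg ?R" unfolding dg_def
            using deg_Pr[OF True, of k n] k dU by auto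
          define j' where "j' = (LEAST j. j < n \<and> j \<notin> ?R \<and> n + j \<notin> ?R)"
          have jR: "j < n \<and> j \<notin> ?R \<and> n + j \<notin> ?R" using j by blast
          have j': "j' < n \<and> j' \<notin> ?R \<and> n + j' \<notin> ?R"
            unfolding j'_def by (rule LeastI[of _ j], rule jR)
          have g: "\<gamma> ?R = E j' ?R" using dR by (simp add: \<gamma>_def j'_def)
          have "E j ?R = E j' ?R"
          proof (cases "j = j'")
            case False
            show ?thesis
              by (rule glue[OF assms(2) hyp j(1) _ False]) (use j' jR dR in \<open>auto simp: dg_def\<close>)
          qed simp
          then show "wsign (Pr n k) ?R * E j ?R = wsign (Pr n k) ?R * \<gamma> ?R" using g by simp
        qed
        finally show ?thesis using W by simp
      next
        case dU: False
        have "\<alpha> U = 0" using \<alpha>V dU by blast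
        moreover have "\<gamma> (U - Pr n k) = 0" if k: "k \<in> {k. k<n \<and> Pr n k \<subseteq> U}" for k
        proof -
          have "\<not> dg (U - Pr n k)"
          proof
            assume d: "dg (U - Pr n k)"
            have "Pr n k \<subseteq> {..<2*n}" using k by (auto simp: Pr_def)
            then have "U \<subseteq> {..<2*n}" using d k unfolding dg_def by blast
            moreover have "int (card (U \<inter> {..<n})) = p \<and> int (card (U \<inter> {n..<2*n})) = q - 1"
              using deg_Pr[OF True, of k n] k d unfolding dg_def by auto
            ultimately show False using dU by blast
          qed
          then show ?thesis by (simp add: \<gamma>_def)
        qed
        ultimately show ?thesis using W by simp
      qed
    qed
  qed
  then show ?thesis using \<gamma>V by blast
qed

end
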